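(* For all real numbers $a,b,c>0$ (note $ab^2+bc^2+ca^2-abc>0$ for such $a,b,c$), \[ \frac{(a^4+b^4+c^4)^{3/2}}{\sqrt{ab^2+bc^2+ca^2-abc}\,\sqrt{a+b+c}} \leq \frac{a^5}{\sqrt{ca+b^2}} + \frac{b^5}{\sqrt{ab+c^2}} + \frac{c^5}{\sqrt{bc+a^2}}. \] *)

theory Defs
  imports Complex_Main
begin

end

theory Submission
  imports Defs
begin

lemma tang:
  fixes a q s X :: real
  assumes "a > 0" "q > 0" "s > 0" "q^2 = X"
  shows "a^5 / q \<ge> 3*a^4/(2*s) - a^2*X/(2*s^3)"
proof -
  define u where "u = q/a"
  have u: "u > 0" using assms by (simp add: u_def)
  have q: "q = a*u" using assms by (simp add: u_def)
  have key: "1/u \<ge> 3/(2*s) - u^2/(2*s^3)"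
  proof -
    have "(s-u)^2*(2*s+u) \<ge> 0" using u assms by simp
    hence "2*s^3 \<ge> 3*s^2*u - u^3" by (simp add: power2_eq_square power3_eq_cube algebra_simps)
    hence "2*s^3/(2*s^3*u) \<ge> (3*s^2*u - u^3)/(2*s^3*u)" using u assms
      by (intro divide_right_mono) auto
    moreover have "2*s^3/(2*s^3*u) = 1/u" using u assms by simp
    moreover have "(3*s^2*u - u^3)/(2*s^3*u) = 3/(2*s) - u^2/(2*s^3)" using u assms
      by (simp add: field_simps power2_eq_square power3_eq_cube)
    ultimately show ?thesis by simp
  qed
  have "a^4 * (1/u) \<ge> a^4 * (3/(2*s) - u^2/(2*s^3))"
    using key assms by (intro mult_left_mono) auto
  moreover have "a^4*(1/u) = a^5/q" using assms u by (simp add: q field_simps eval_nat_numeral)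
  moreover have "a^4 * (3/(2*s) - u^2/(2*s^3)) = 3*a^4/(2*s) - a^2*X/(2*s^3)"
    using assms u unfolding assms(4)[symmetric] q by (simp add: field_simps power2_eq_square eval_nat_numeral)
  ultimately show ?thesis by simp
qed

theorem mainTheorem7:
  fixes a b c :: real
  assumes "a > 0" and "b > 0" and "c > 0"
  shows "(a^4 + b^4 + c^4) powr (3/2)
           / (sqrt (a*b^2 + b*c^2 + c*a^2 - a*b*c) * sqrt (a + b + c))
         \<le> a^5 / sqrt (c*a + b^2) + b^5 / sqrt (a*b + c^2) + c^5 / sqrt (b*c + a^2)"
proof -
  define S where "S = a^4 + b^4 + c^4"
  define T where "T = a^2*(c*a+b^2) + b^2*(a*b+c^2) + c^2*(b*c+a^2)"
  have S: "S > 0" using assms by (simp add: S_def add_pos_pos)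
  have T: "T > 0" using assms by (simp add: T_def add_pos_pos)
  have TE: "T = (a*b^2 + b*c^2 + c*a^2 - a*b*c) * (a + b + c)"
    by (simp add: T_def algebra_simps power2_eq_square)
  have P: "a*b^2 + b*c^2 + c*a^2 - a*b*c > 0"
    using T TE assms by (simp add: zero_less_mult_iff)
  have den: "sqrt (a*b^2 + b*c^2 + c*a^2 - a*b*c) * sqrt (a + b + c) = sqrt T"
    using TE by (simp add: real_sqrt_mult)
  have pw: "S powr (3/2) = S * sqrt S"
  proof -
    have "S powr (3/2) = S powr (1 + 1/2)" by simp
    also have "\<dots> = S powr 1 * S powr (1/2)" by (rule powr_add)
    finally show ?thesis using S by (simp add: powr_half_sqrt)
  qed
  define s where "s = sqrt T / sqrt S"
  have s: "s > 0" using S T by (simp add: s_def)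
  have s2: "s^2 = T/S" using S T by (simp add: s_def power_divide)
  have h1: "a^5 / sqrt (c*a + b^2) \<ge> 3*a^4/(2*s) - a^2*(c*a+b^2)/(2*s^3)"
    using assms s by (intro tang) (auto intro: add_pos_pos)
  have h2: "b^5 / sqrt (a*b + c^2) \<ge> 3*b^4/(2*s) - b^2*(a*b+c^2)/(2*s^3)"
    using assms s by (intro tang) (auto intro: add_pos_pos)
  have h3: "c^5 / sqrt (b*c + a^2) \<ge> 3*c^4/(2*s) - c^2*(b*c+a^2)/(2*s^3)"
    using assms s by (intro tang) (auto intro: add_pos_pos)
  have sum: "(3*a^4/(2*s) - a^2*(c*a+b^2)/(2*s^3)) + (3*b^4/(2*s) - b^2*(a*b+c^2)/(2*s^3))
      + (3*c^4/(2*s) - c^2*(b*c+a^2)/(2*s^3)) = 3*S/(2*s) - T/(2*s^3)"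
    using s by (simp add: S_def T_def field_simps)
  have "3*S/(2*s) - T/(2*s^3) = S/s"
  proof -
    have "T = S * s^2" using s2 S by simp
    thus ?thesis using s by (simp add: field_simps power2_eq_square power3_eq_cube)
  qed
  also have "S/s = S * sqrt S / sqrt T" using S T by (simp add: s_def)
  finally have eq: "3*S/(2*s) - T/(2*s^3) = S powr (3/2) / sqrt T" using pw by simp
  show ?thesis unfolding den using h1 h2 h3 sum eq by (simp add: S_def)
qed

end
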